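(* Let $M$ be a positive integer and let $K$ be an integer with $q_{KL}-1\le K\le M$. Then for every $q\in\mathcal U(M)\cap(1,K+1]$, the quasi-greedy expansion $\alpha(q)=(\alpha_i(q))$ satisfies \[M-K\le\alpha_i(q)\le K\quad\text{for all }i\ge1.\]
   Context: For a positive integer $J$, $\mathcal U(J)$ is the set of $q\in(1,J+1]$ such that $1$ has exactly one expansion $1=\sum_{i\ge1}d_iq^{-i}$ with $d_i\in\{0,1,\dots,J\}$. For $q\in(1,M+1]$, $\alpha(q)=\alpha_1(q)\alpha_2(q)\dots$ is the quasi-greedy $q$-expansion of $1$ over the alphabet $\{0,1,\dots,M\}$, i.e. the lexicographically largest sequence $(a_i)\in\{0,\dots,M\}^{\mathbb N}$ not ending in $0^\infty$ with $\sum a_iq^{-i}=1$. Let $(\tau_i)_{i\ge0}$ be the Thue–Morse sequence ($\tau_0=0$, $\tau_{2^n}\dots\tau_{2^{n+1}-1}=(1-\tau_0)\dots(1-\tau_{2^n-1})$); $q_{KL}=q_{KL}(M)$ is the base with $\alpha(q_{KL})=\lambda_1\lambda_2\dots$, $\lambda_i=k+\tau_i-\tau_{i-1}$ if $M=2k$, $\lambda_i=k+\tau_i$ if $M=2k+1$. *)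

theory Defs
  imports "HOL-Analysis.Analysis"
begin

text \<open>Sequences (d_1, d_2, ...) are encoded 0-based: d i stands for d_(i+1).\<close>

definition is_expansion :: "nat \<Rightarrow> real \<Rightarrow> (nat \<Rightarrow> nat) \<Rightarrow> bool" where
  "is_expansion J q d \<longleftrightarrow> (\<forall>i. d i \<le> J) \<and> (\<lambda>i. real (d i) / q ^ Suc i) sums 1"

definition univoque :: "nat \<Rightarrow> real set" where
  "univoque J = {q. 1 < q \<and> q \<le> real J + 1 \<and> (\<exists>!d. is_expansion J q d)}"

definition lex_less :: "(nat \<Rightarrow> nat) \<Rightarrow> (nat \<Rightarrow> nat) \<Rightarrow> bool" where
  "lex_less a b \<longleftrightarrow> (\<exists>n. (\<forall>i<n. a i = b i) \<and> a n < b n)"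

definition not_ending_zero :: "(nat \<Rightarrow> nat) \<Rightarrow> bool" where
  "not_ending_zero a \<longleftrightarrow> infinite {i. a i \<noteq> 0}"

definition quasi_greedy :: "nat \<Rightarrow> real \<Rightarrow> (nat \<Rightarrow> nat)" where
  "quasi_greedy M q = (THE a. is_expansion M q a \<and> not_ending_zero a \<and>
      (\<forall>b. is_expansion M q b \<and> not_ending_zero b \<longrightarrow> b = a \<or> lex_less b a))"

text \<open>Thue--Morse: block n = tau_0 ... tau_(2^n - 1), block (n+1) = block n followed by its complement.\<close>
fun tm_block :: "nat \<Rightarrow> nat list" where
  "tm_block 0 = [0]"
| "tm_block (Suc n) = tm_block n @ map (\<lambda>x. 1 - x) (tm_block n)"

definition thue_morse :: "nat \<Rightarrow> int" where
  "thue_morse i = int (tm_block (Suc i) ! i)"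

text \<open>lambda_i (i \<ge> 1), returned 0-based: kl_seq M i = lambda_(i+1).\<close>
definition kl_seq :: "nat \<Rightarrow> nat \<Rightarrow> nat" where
  "kl_seq M i = (if even M
      then nat (int (M div 2) + thue_morse (Suc i) - thue_morse i)
      else nat (int (M div 2) + thue_morse (Suc i)))"

definition q_KL :: "nat \<Rightarrow> real" where
  "q_KL M = (THE q. 1 < q \<and> q \<le> real M + 1 \<and> quasi_greedy M q = kl_seq M)"

end

theory Submission
  imports Defs
begin

lemma geom_M:
  assumes "1 < (q::real)"
  shows "(\<lambda>j. real M / q ^ Suc j) sums (real M / (q - 1))"
proof -
  have "norm (1/q) < 1" using assms by simp
  then have "(\<lambda>j. (1/q)^j) sums (1 / (1 - 1/q))" by (rule geometric_sums)
  then have "(\<lambda>j. (M/q) * (1/q)^j) sums ((M/q) * (1 / (1 - 1/q)))" by (rule sums_mult)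
  moreover have "(M/q) * (1 / (1 - 1/q)) = M/(q-1)" using assms by (simp add: field_simps)
  moreover have "\<And>j. (M/q) * (1/q)^j = M / q^Suc j" by (simp add: power_one_over)
  ultimately show ?thesis by (simp only:)
qed

lemma cons_sums:
  assumes "(\<lambda>j. real (e j) / q ^ Suc j) sums y" "(q::real) \<noteq> 0"
  shows "(\<lambda>j. real (case j of 0 \<Rightarrow> a | Suc k \<Rightarrow> e k) / q ^ Suc j) sums ((real a + y)/q)"
proof -
  let ?f = "\<lambda>j. real (case j of 0 \<Rightarrow> a | Suc k \<Rightarrow> e k) / q ^ Suc j"
  have "(\<lambda>j. real (e j) / q ^ Suc j / q) sums (y/q)" using assms(1) by (rule sums_divide)
  moreover have "\<And>j. ?f (Suc j) = real (e j) / q ^ Suc j / q" by (simp add: field_simps)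
  ultimately have "(\<lambda>j. ?f (Suc j)) sums (y/q)" by (simp only:)
  then have "?f sums (y/q + ?f 0)" by (rule sums_Suc_iff[THEN iffD1])
  moreover have "y/q + ?f 0 = (real a + y)/q" by (simp add: add_divide_distrib)
  ultimately show ?thesis by simp
qed

definition gdig :: "nat \<Rightarrow> real \<Rightarrow> real \<Rightarrow> nat" where
  "gdig M q r = min M (nat \<lfloor>q*r\<rfloor>)"

fun grem :: "nat \<Rightarrow> real \<Rightarrow> real \<Rightarrow> nat \<Rightarrow> real" where
  "grem M q x 0 = x"
| "grem M q x (Suc n) = q * grem M q x n - real (gdig M q (grem M q x n))"

lemma exist_exp:
  assumes q: "1 < q" "q \<le> real M + 1" and x: "0 \<le> x" "x \<le> real M / (q - 1)"
  shows "\<exists>e. (\<forall>j. e j \<le> M) \<and> (\<lambda>j. real (e j) / q ^ Suc j) sums x"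
proof -
  define G where "G = real M / (q - 1)"
  have GM: "G * (q - 1) = M" using q by (simp add: G_def)
  have G1: "1 \<le> G" using q by (simp add: G_def field_simps)
  define r where "r = grem M q x"
  define e where "e n = gdig M q (r n)" for n
  have inv: "0 \<le> r n \<and> r n \<le> G" for n
  proof (induction n)
    case 0 then show ?case using x by (simp add: r_def G_def)
  next
    case (Suc n)
    have rs: "r (Suc n) = q * r n - e n" by (simp add: r_def e_def)
    show ?case
    proof (cases "real M \<le> q * r n")
      case True
      then have "nat \<lfloor>q * r n\<rfloor> \<ge> M"
        by (metis le_nat_floor nat_le_real_less of_nat_less_iff linorder_not_less floor_of_nat le_floor_iff nat_int of_int_of_nat_eq)
      then have "e n = M" by (simp add: e_def gdig_def)
      moreover have "q * r n \<le> q * G" using Suc q by simp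
      ultimately show ?thesis using rs True GM by (simp add: algebra_simps)
    next
      case False
      have nn: "0 \<le> q * r n" using Suc q by simp
      have "nat \<lfloor>q * r n\<rfloor> \<le> M" using False
        by (metis floor_le_iff le_nat_iff linorder_not_less nat_int of_int_of_nat_eq order_le_less le_floor_iff floor_of_nat less_imp_le nat_mono)
      then have en: "e n = nat \<lfloor>q * r n\<rfloor>" by (simp add: e_def gdig_def)
      have "real (e n) = of_int \<lfloor>q * r n\<rfloor>" using en nn by simp
      then have "0 \<le> r (Suc n) \<and> r (Suc n) < 1" using rs by linarith
      then show ?thesis using G1 by simp
    qed
  qed
  have ps: "(\<Sum>j<n. real (e j) / q ^ Suc j) = x - r n / q ^ n" for n
  proof (induction n)
    case 0 then show ?case by (simp add: r_def)
  next
    case (Suc n)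
    have rs: "r (Suc n) = q * r n - e n" by (simp add: r_def e_def)
    have "(\<Sum>j<Suc n. real (e j) / q ^ Suc j) = x - r n / q ^ n + e n / q ^ Suc n" using Suc by simp
    also have "\<dots> = x - (q * r n - e n) / q ^ Suc n" using q by (simp add: field_simps)
    finally show ?case using rs by simp
  qed
  have "(\<lambda>n. G * (1/q)^n) \<longlonglongrightarrow> G * 0"
    using q by (intro tendsto_mult tendsto_const LIMSEQ_power_zero) simp
  then have lim0: "(\<lambda>n. G * (1/q)^n) \<longlonglongrightarrow> 0" by simp
  have "(\<lambda>n. r n / q ^ n) \<longlonglongrightarrow> 0"
  proof (rule Lim_null_comparison[OF _ lim0])
    show "\<forall>\<^sub>F n in sequentially. norm (r n / q ^ n) \<le> G * (1 / q) ^ n"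
      using inv q by (auto intro!: always_eventually divide_right_mono simp: power_one_over)
  qed
  then have "(\<lambda>n. x - r n / q ^ n) \<longlonglongrightarrow> x - 0" by (intro tendsto_diff tendsto_const)
  then have "(\<lambda>j. real (e j) / q ^ Suc j) sums x" unfolding sums_def ps by simp
  moreover have "\<forall>j. e j \<le> M" by (simp add: e_def gdig_def)
  ultimately show ?thesis by blast
qed


theorem lemma7p1:
  fixes M K :: nat and q :: real
  assumes "M \<ge> 1"
    and "q_KL M - 1 \<le> real K" and "K \<le> M"
    and "q \<in> univoque M" and "1 < q" and "q \<le> real K + 1"
  shows "\<forall>i. M - K \<le> quasi_greedy M q i \<and> quasi_greedy M q i \<le> K"
proof -
  from assms(4) have q1: "1 < q" "q \<le> real M + 1" and ex1: "\<exists>!d. is_expansion M q d"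
    by (auto simp: univoque_def)
  obtain d where dexp: "is_expansion M q d" and duniq: "\<And>e. is_expansion M q e \<Longrightarrow> e = d"
    using ex1 by blast
  have dle: "\<And>i. d i \<le> M" and dsum: "(\<lambda>i. real (d i) / q ^ Suc i) sums 1"
    using dexp is_expansion_def by auto
  define G where "G = real M / (q - 1)"
  have GM: "G * (q - 1) = M" using q1 by (simp add: G_def)
  have G1: "1 \<le> G" using q1 by (simp add: G_def field_simps)
  define T where "T i = suminf (\<lambda>j. real (d (i+j)) / q ^ Suc j)" for i
  have summ: "summable (\<lambda>j. real (d (i+j)) / q ^ Suc j)" for i
  proof (rule summable_comparison_test)
    show "\<exists>N. \<forall>n\<ge>N. norm (real (d (i + n)) / q ^ Suc n) \<le> real M / q ^ Suc n"
      using dle q1 by (auto intro!: divide_right_mono)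
    show "summable (\<lambda>j. real M / q ^ Suc j)" using geom_M[OF q1(1)] by (rule sums_summable)
  qed
  have Tsums: "(\<lambda>j. real (d (i+j)) / q ^ Suc j) sums T i" for i
    using summ[of i] by (simp add: T_def summable_sums)
  have TleG: "T i \<le> G" for i
  proof -
    have "\<And>n. real (d (i + n)) / q ^ Suc n \<le> real M / q ^ Suc n"
      using dle q1 by (auto intro!: divide_right_mono)
    then show ?thesis unfolding G_def using sums_le[OF _ Tsums[of i] geom_M[OF q1(1), of M]] by blast
  qed
  have Tnn: "0 \<le> T i" for i
    using sums_le[OF _ sums_zero Tsums[of i]] q1 by auto
  have Trec: "T i = (real (d i) + T (Suc i)) / q" for i
  proof -
    have "(\<lambda>j. real (d (Suc i + j)) / q ^ Suc j) sums T (Suc i)" by (rule Tsums)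
    then have "(\<lambda>j. real (case j of 0 \<Rightarrow> d i | Suc k \<Rightarrow> d (Suc i + k)) / q ^ Suc j)
       sums ((real (d i) + T (Suc i)) / q)" using q1 by (intro cons_sums) auto
    moreover have "(\<lambda>j. case j of 0 \<Rightarrow> d i | Suc k \<Rightarrow> d (Suc i + k)) = (\<lambda>j. d (i + j))"
      by (rule ext) (simp split: nat.split)
    ultimately have "(\<lambda>j. real (d (i + j)) / q ^ Suc j) sums ((real (d i) + T (Suc i)) / q)"
      by simp
    then show ?thesis using Tsums[of i] sums_unique2 by blast
  qed
  have T0: "T 0 = 1" using Tsums[of 0] dsum sums_unique2 by simp
  have Uniq: "\<And>e. (\<forall>j. e j \<le> M) \<Longrightarrow> (\<lambda>j. real (e j) / q ^ Suc j) sums T i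
      \<Longrightarrow> e = (\<lambda>j. d (i+j))" for i
  proof (induction i)
    case 0
    then have "is_expansion M q e" using T0 by (simp add: is_expansion_def)
    then show ?case using duniq by simp
  next
    case (Suc i)
    define e' where "e' j = (case j of 0 \<Rightarrow> d i | Suc k \<Rightarrow> e k)" for j
    have "(\<lambda>j. real (e' j) / q ^ Suc j) sums ((real (d i) + T (Suc i)) / q)"
      unfolding e'_def using Suc.prems q1 by (intro cons_sums) auto
    then have "(\<lambda>j. real (e' j) / q ^ Suc j) sums T i" using Trec[of i] by simp
    moreover have "\<forall>j. e' j \<le> M" using Suc.prems dle by (simp add: e'_def split: nat.split)
    ultimately have "e' = (\<lambda>j. d (i+j))" using Suc.IH by blast
    then have "\<And>k. e' (Suc k) = d (i + Suc k)" by simp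
    then show ?case by (auto simp: e'_def)
  qed
  have greedy: "T (Suc i) < 1" if "d i < M" for i
  proof (rule ccontr)
    assume "\<not> T (Suc i) < 1"
    then obtain e where e: "\<forall>j. e j \<le> M" "(\<lambda>j. real (e j) / q ^ Suc j) sums (T (Suc i) - 1)"
      using exist_exp[OF q1, of "T (Suc i) - 1"] TleG[of "Suc i"] G1 unfolding G_def by auto
    define e' where "e' j = (case j of 0 \<Rightarrow> d i + 1 | Suc k \<Rightarrow> e k)" for j
    have "(\<lambda>j. real (e' j) / q ^ Suc j) sums ((real (d i + 1) + (T (Suc i) - 1)) / q)"
      unfolding e'_def using e q1 by (intro cons_sums) auto
    then have "(\<lambda>j. real (e' j) / q ^ Suc j) sums T i" using Trec[of i] by simp
    moreover have "\<forall>j. e' j \<le> M" using e that by (simp add: e'_def split: nat.split)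
    ultimately have "e' = (\<lambda>j. d (i+j))" using Uniq by blast
    then have "e' 0 = d i" by simp
    then show False by (simp add: e'_def)
  qed
  have lazy: "G - 1 < T (Suc i)" if "0 < d i" for i
  proof (rule ccontr)
    assume "\<not> G - 1 < T (Suc i)"
    then obtain e where e: "\<forall>j. e j \<le> M" "(\<lambda>j. real (e j) / q ^ Suc j) sums (T (Suc i) + 1)"
      using exist_exp[OF q1, of "T (Suc i) + 1"] Tnn[of "Suc i"] unfolding G_def by auto
    define e' where "e' j = (case j of 0 \<Rightarrow> d i - 1 | Suc k \<Rightarrow> e k)" for j
    have "(\<lambda>j. real (e' j) / q ^ Suc j) sums ((real (d i - 1) + (T (Suc i) + 1)) / q)"
      unfolding e'_def using e q1 by (intro cons_sums) auto
    moreover have "real (d i - 1) + (T (Suc i) + 1) = real (d i) + T (Suc i)"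
      using that by (simp add: of_nat_diff)
    ultimately have "(\<lambda>j. real (e' j) / q ^ Suc j) sums T i" using Trec[of i] by simp
    moreover have "\<forall>j. e' j \<le> M" using e dle[of i] by (simp add: e'_def split: nat.split)
    ultimately have "e' = (\<lambda>j. d (i+j))" using Uniq by blast
    then have "e' 0 = d i" by simp
    then show False using that by (simp add: e'_def)
  qed
  have Tsuc: "T (Suc n) = q * T n - real (d n)" for n
    using Trec[of n] q1 by (simp add: field_simps)
  have Tpos: "0 < T n" for n
  proof (induction n)
    case 0 then show ?case using T0 by simp
  next
    case (Suc n)
    show ?case
    proof (cases "d n = 0")
      case True then show ?thesis using Tsuc[of n] Suc q1 by simp
    next
      case False then show ?thesis using lazy[of n] G1 by simp
    qed
  qed
  have ne0: "not_ending_zero d"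
    unfolding not_ending_zero_def infinite_nat_iff_unbounded
  proof
    fix m
    show "\<exists>n>m. n \<in> {i. d i \<noteq> 0}"
    proof (rule ccontr)
      assume "\<not> (\<exists>n>m. n \<in> {i. d i \<noteq> 0})"
      then have "\<And>j. d (Suc m + j) = 0" by auto
      then have "T (Suc m) = 0" using Tsums[of "Suc m"] sums_zero sums_unique2[of "\<lambda>_. 0::real"] by simp
      then show False using Tpos[of "Suc m"] by simp
    qed
  qed
  have qg: "quasi_greedy M q = d"
    unfolding quasi_greedy_def
  proof (rule the_equality)
    show "is_expansion M q d \<and> not_ending_zero d \<and>
      (\<forall>b. is_expansion M q b \<and> not_ending_zero b \<longrightarrow> b = d \<or> lex_less b d)"
      using dexp ne0 duniq by blast
  next
    fix a assume "is_expansion M q a \<and> not_ending_zero a \<and>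
      (\<forall>b. is_expansion M q b \<and> not_ending_zero b \<longrightarrow> b = a \<or> lex_less b a)"
    then show "a = d" using duniq by blast
  qed
  show ?thesis
  proof (cases "K = M")
    case True then show ?thesis using qg dle by simp
  next
    case False
    then have KM: "K < M" using assms(3) by simp
    then have qM: "q < real M + 1" using assms(6) by linarith
    have step: "1 < T n" if "1 \<le> T (Suc n)" for n
    proof -
      have "d n = M" using greedy[of n] dle[of n] that by fastforce
      then have "T n = (real M + T (Suc n)) / q" using Trec[of n] by simp
      moreover have "1 < (real M + T (Suc n)) / q" using that qM q1 by (simp add: field_simps)
      ultimately show ?thesis by simp
    qed
    have chain: "1 \<le> T (Suc n) \<longrightarrow> 1 < T 0" for n
    proof (induction n)
      case 0 then show ?case using step[of 0] by simp
    next
      case (Suc n) then show ?case using step[of "Suc n"] by auto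
    qed
    have Tlt: "T (Suc n) < 1" for n using chain[of n] T0 by linarith
    have Tle1: "T n \<le> 1" for n using T0 Tlt by (cases n) (auto simp: less_imp_le)
    have dltq: "real (d i) < q" for i
      using Tsuc[of i] Tpos[of "Suc i"] Tle1[of i] q1 by (smt (verit) mult_left_le)
    have upper: "d i \<le> K" for i using dltq[of i] assms(6) by linarith
    have d0gt: "q - 1 < real (d 0)" using Tsuc[of 0] T0 Tlt[of 0] by simp
    have lazyB: "M - K \<le> d (Suc i)" if "0 < d i" for i
    proof -
      have "G - 1 < T (Suc i)" by (rule lazy[OF that])
      moreover have "T (Suc i) \<le> (real (d (Suc i)) + G) / q"
        using Trec[of "Suc i"] TleG[of "Suc (Suc i)"] q1 by (simp add: divide_right_mono)
      ultimately have "G - 1 < (real (d (Suc i)) + G) / q" by linarith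
      then have "q * G - q < real (d (Suc i)) + G" using q1 by (simp add: field_simps)
      then have "real M - q < real (d (Suc i))" using GM by (simp add: algebra_simps)
      then have "real M < real (d (Suc i)) + real K + 1" using assms(6) by linarith
      then show ?thesis by linarith
    qed
    have d0: "M - K \<le> d 0"
    proof (rule ccontr)
      assume a: "\<not> M - K \<le> d 0"
      have "0 < d 0" using d0gt q1 by simp
      then have "M - K \<le> d 1" using lazyB[of 0] by simp
      then have "real (d 0) + 1 \<le> real (d 1)" using a by linarith
      then show False using dltq[of 1] d0gt by linarith
    qed
    have lower: "M - K \<le> d i" for i
    proof (induction i)
      case 0 then show ?case by (rule d0)
    next
      case (Suc i)
      then have "0 < d i" using KM by linarith
      then show ?case by (rule lazyB)
    qed
    show ?thesis using qg upper lower by simp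
  qed
qed

end
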